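(* The one-dimensional subalgebras of ${\rm A}_4$ are exactly $\langle e_1\rangle$, $\langle e_2\rangle$, $\langle e_1-e_2\rangle$, $\langle e_1+e_2\pm \mathrm{i}e_3\rangle$ and $\langle e_1-e_2\pm\mathrm{i}e_3\rangle$. Up to automorphisms of ${\rm A}_4$, every one-dimensional subalgebra is equivalent to one of $\langle e_1\rangle$, $\langle e_2\rangle$, $\langle e_1-e_2\rangle$, $\langle e_1+e_2+\mathrm{i}e_3\rangle$, $\langle e_1-e_2+\mathrm{i}e_3\rangle$.
   Context: ${\rm A}_4$ is the complex algebra with basis $e_1,e_2,e_3$, unit $e_1$ ($e_1e_i=e_ie_1=e_i$), $e_2e_2=e_2$ and $e_3e_3=-e_1+e_2$; all other products of basis elements are zero. $\mathrm{i}=\sqrt{-1}$. A subalgebra is a linear subspace closed under multiplication (it need not contain $e_1$). Equivalence up to automorphisms means one is mapped onto the other by an algebra automorphism. $\langle S\rangle$ denotes linear span. *)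

theory Defs
  imports "HOL-Analysis.Analysis"
begin

text \<open>The algebra A_4: underlying complex vector space complex^3 with basis
  e1 = axis 1 1, e2 = axis 2 1, e3 = axis 3 1 (complex scalar multiplication (*s)).\<close>

type_synonym A4 = "complex ^ 3"

definition e1 :: A4 where "e1 = axis 1 1"
definition e2 :: A4 where "e2 = axis 2 1"
definition e3 :: A4 where "e3 = axis 3 1"

text \<open>Product: (a1 e1 + a2 e2 + a3 e3)(b1 e1 + b2 e2 + b3 e3), using e1 unit,
  e2 e2 = e2, e3 e3 = -e1 + e2, all other products of basis elements zero.\<close>
definition A4_mult :: "A4 \<Rightarrow> A4 \<Rightarrow> A4" where
  "A4_mult x y =
     (x$1 * y$1) *s e1
   + (x$1 * y$2 + x$2 * y$1 + x$2 * y$2) *s e2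
   + (x$1 * y$3 + x$3 * y$1) *s e3
   + (x$3 * y$3) *s (e2 - e1)"

text \<open>Subalgebra: complex linear subspace closed under multiplication.\<close>
definition A4_subalgebra :: "A4 set \<Rightarrow> bool" where
  "A4_subalgebra S \<longleftrightarrow> vec.subspace S \<and> (\<forall>x\<in>S. \<forall>y\<in>S. A4_mult x y \<in> S)"

text \<open>Algebra automorphism: bijective complex-linear multiplicative map.\<close>
definition A4_automorphism :: "(A4 \<Rightarrow> A4) \<Rightarrow> bool" where
  "A4_automorphism f \<longleftrightarrow> Vector_Spaces.linear (*s) (*s) f \<and> bij f
     \<and> (\<forall>x y. f (A4_mult x y) = A4_mult (f x) (f y))"

end

theory Submission imports Defs begin

lemma comps: "A4_mult x y $ 1 = x$1*y$1 - x$3*y$3"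
  "A4_mult x y $ 2 = x$1*y$2 + x$2*y$1 + x$2*y$2 + x$3*y$3"
  "A4_mult x y $ 3 = x$1*y$3 + x$3*y$1"
  by (simp_all add: A4_mult_def e1_def e2_def e3_def axis_def)

lemma e_comps: "e1$1 = 1" "e1$2 = 0" "e1$3 = 0" "e2$1 = 0" "e2$2 = 1" "e2$3 = 0"
  "e3$1 = 0" "e3$2 = 0" "e3$3 = 1"
  by (simp_all add: e1_def e2_def e3_def axis_def)

lemma veq3: "(x::A4) = y \<longleftrightarrow> x$1 = y$1 \<and> x$2 = y$2 \<and> x$3 = y$3"
  by (simp add: vec_eq_iff forall_3)

lemma mult_smult: "A4_mult (s *s v) (t *s w) = (s*t) *s A4_mult v w"
  unfolding veq3 by (simp add: comps algebra_simps)

lemma sub_span: assumes "A4_mult w w = l *s w" shows "A4_subalgebra (vec.span {w})"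
  unfolding A4_subalgebra_def
proof (intro conjI ballI)
  fix x y assume "x \<in> vec.span {w}" "y \<in> vec.span {w}"
  then obtain s t where "x = s *s w" "y = t *s w" unfolding vec.span_singleton by auto
  then have "A4_mult x y = (s*t*l) *s w" using assms by (simp add: mult_smult)
  then show "A4_mult x y \<in> vec.span {w}" unfolding vec.span_singleton by auto
qed simp

lemma dim1: "w \<noteq> 0 \<Longrightarrow> vec.dim (vec.span {w}) = 1"
  by (simp add: vec.dim_insert)

lemma span_scale: "k \<noteq> 0 \<Longrightarrow> vec.span {k *s w} = vec.span {w}"
proof -
  assume k: "k \<noteq> 0"
  have "range (\<lambda>t. t *s (k *s w)) = range (\<lambda>t. t *s w)"
  proof (intro set_eqI iffI)
    fix x assume "x \<in> range (\<lambda>t. t *s (k *s w))"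
    then obtain t where "x = t *s (k *s w)" by auto
    then have "x = (t*k) *s w" by simp
    then show "x \<in> range (\<lambda>t. t *s w)" by blast
  next
    fix x assume "x \<in> range (\<lambda>t. t *s w)"
    then obtain t where "x = t *s w" by auto
    then have "x = (t/k) *s (k *s w)" using k by simp
    then show "x \<in> range (\<lambda>t. t *s (k *s w))" by blast
  qed
  then show ?thesis unfolding vec.span_singleton .
qed

definition flip :: "A4 \<Rightarrow> A4" where "flip x = (\<chi> i. if i = 3 then - x$i else x$i)"

lemma flip_lin: "Vector_Spaces.linear (*s) (*s) flip"
  unfolding flip_def by unfold_locales (vector algebra_simps)+

lemma flip_comps: "flip x $1 = x$1" "flip x $2 = x$2" "flip x $3 = - x$3"
  by (simp_all add: flip_def)

lemma flip_aut: "A4_automorphism flip"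
proof -
  have ff: "flip (flip x) = x" for x unfolding veq3 by (simp add: flip_comps)
  have "bij flip" by (metis ff bij_betw_byWitness subset_UNIV surjI surj_def)
  moreover have "flip (A4_mult x y) = A4_mult (flip x) (flip y)" for x y
    unfolding veq3 by (simp add: flip_comps comps)
  ultimately show ?thesis using flip_lin unfolding A4_automorphism_def by auto
qed

lemma id_aut: "A4_automorphism id"
  unfolding A4_automorphism_def by (simp add: vec.linear_id)


lemma from_S: assumes "A4_subalgebra S" "vec.dim S = 1"
  shows "\<exists>v l. v \<noteq> 0 \<and> S = vec.span {v} \<and> A4_mult v v = l *s v"
proof -
  have sub: "vec.subspace S" using assms(1) unfolding A4_subalgebra_def by auto
  obtain B where B: "B \<subseteq> S" "vec.independent B" "S \<subseteq> vec.span B" "card B = 1"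
    using vec.basis_exists[of S] assms(2) by metis
  then obtain v where v: "B = {v}" by (meson card_1_singletonE)
  have "v \<noteq> 0" using B(2) v vec.dependent_zero by blast
  moreover have "S = vec.span {v}" using B v sub vec.span_minimal by blast
  moreover have "A4_mult v v \<in> S" using assms(1) B(1) v unfolding A4_subalgebra_def by auto
  ultimately show ?thesis unfolding vec.span_singleton by auto
qed

lemma classify: assumes "v \<noteq> 0" "A4_mult v v = l *s v"
  shows "vec.span {v} \<in> {vec.span {e1}, vec.span {e2}, vec.span {e1 - e2},
                 vec.span {e1 + e2 + \<i> *s e3}, vec.span {e1 + e2 - \<i> *s e3},
                 vec.span {e1 - e2 + \<i> *s e3}, vec.span {e1 - e2 - \<i> *s e3}}"
proof -
  define a b c where "a = v$1" "b = v$2" "c = v$3"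
  have h1: "a*a - c*c = l*a" and h2: "a*b + b*a + b*b + c*c = l*b" and h3: "a*c + c*a = l*c"
    using assms(2) unfolding veq3 by (simp_all add: comps a_b_c_def)
  have nz: "\<not> (a = 0 \<and> b = 0 \<and> c = 0)" using assms(1) unfolding veq3 by (simp add: a_b_c_def)
  have sc: "v = a *s w \<Longrightarrow> a \<noteq> 0 \<Longrightarrow> vec.span {v} = vec.span {w}" for w a
    using span_scale by simp
  show ?thesis
  proof (cases "c = 0")
    case True
    show ?thesis
    proof (cases "a = 0")
      case True
      with \<open>c = 0\<close> nz have "b \<noteq> 0" by auto
      have "v = b *s e2" unfolding veq3 using True \<open>c = 0\<close> by (simp add: e_comps a_b_c_def)
      then have "vec.span {v} = vec.span {e2}" using sc \<open>b \<noteq> 0\<close> by blast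
      then show ?thesis by simp
    next
      case False
      have "a*a = l*a" using h1 \<open>c = 0\<close> by simp
      then have "l = a" using False by simp
      then have "b * (a + b) = 0" using h2 \<open>c = 0\<close> by (simp add: algebra_simps)
      then have "b = 0 \<or> b = -a" by (auto simp: add_eq_0_iff2)
      then show ?thesis
      proof
        assume "b = 0"
        then have "v = a *s e1" unfolding veq3 using \<open>c = 0\<close> by (simp add: e_comps a_b_c_def)
        then have "vec.span {v} = vec.span {e1}" using sc False by blast
        then show ?thesis by simp
      next
        assume "b = -a"
        then have "v = a *s (e1 - e2)" unfolding veq3 using \<open>c = 0\<close> by (simp add: e_comps a_b_c_def)
        then have "vec.span {v} = vec.span {e1 - e2}" using sc False by blast
        then show ?thesis by simp
      qed
    qed
  next
    case False
    have "(2*a)*c = l*c" using h3 by (simp add: algebra_simps)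
    then have l: "l = 2*a" using False by simp
    then have "a*a + c*c = 0" using h1 by (simp add: algebra_simps)
    then have "c*c = - (a*a)" by (metis add.commute eq_neg_iff_add_eq_0)
    have "(c - \<i>*a) * (c + \<i>*a) = c*c + a*a" by (simp add: algebra_simps power2_eq_square[symmetric])
    then have "(c - \<i>*a) * (c + \<i>*a) = 0" using \<open>c*c = - (a*a)\<close> by simp
    then have cc: "c = \<i>*a \<or> c = - \<i>*a" by (auto simp: add_eq_0_iff2)
    then have "a \<noteq> 0" using False by auto
    have "b*b = a*a" using h2 l \<open>c*c = - (a*a)\<close> by (simp add: algebra_simps)
    then have "(b - a) * (b + a) = 0" by (simp add: algebra_simps)
    then have bb: "b = a \<or> b = -a" by (auto simp: add_eq_0_iff2)
    show ?thesis using cc bb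
    proof (elim disjE)
      assume "c = \<i>*a" "b = a"
      then have "v = a *s (e1 + e2 + \<i> *s e3)" unfolding veq3 by (simp add: e_comps a_b_c_def)
      then have "vec.span {v} = vec.span {e1 + e2 + \<i> *s e3}" using sc \<open>a \<noteq> 0\<close> by blast
      then show ?thesis by simp
    next
      assume "c = \<i>*a" "b = -a"
      then have "v = a *s (e1 - e2 + \<i> *s e3)" unfolding veq3 by (simp add: e_comps a_b_c_def)
      then have "vec.span {v} = vec.span {e1 - e2 + \<i> *s e3}" using sc \<open>a \<noteq> 0\<close> by blast
      then show ?thesis by simp
    next
      assume "c = -\<i>*a" "b = a"
      then have "v = a *s (e1 + e2 - \<i> *s e3)" unfolding veq3 by (simp add: e_comps a_b_c_def)
      then have "vec.span {v} = vec.span {e1 + e2 - \<i> *s e3}" using sc \<open>a \<noteq> 0\<close> by blast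
      then show ?thesis by simp
    next
      assume "c = -\<i>*a" "b = -a"
      then have "v = a *s (e1 - e2 - \<i> *s e3)" unfolding veq3 by (simp add: e_comps a_b_c_def)
      then have "vec.span {v} = vec.span {e1 - e2 - \<i> *s e3}" using sc \<open>a \<noteq> 0\<close> by blast
      then show ?thesis by simp
    qed
  qed
qed

lemma flip_img: "flip ` vec.span {w} = vec.span {flip w}"
proof -
  have "flip (k *s w) = k *s flip w" for k unfolding veq3 by (simp add: flip_comps)
  then show ?thesis unfolding vec.span_singleton image_image by simp
qed

lemma flip_e: "flip (e1 + e2 - \<i> *s e3) = e1 + e2 + \<i> *s e3"
  "flip (e1 - e2 - \<i> *s e3) = e1 - e2 + \<i> *s e3"
  unfolding veq3 by (simp_all add: flip_comps e_comps)

lemma ww: "A4_mult e1 e1 = 1 *s e1" "A4_mult e2 e2 = 1 *s e2" "A4_mult (e1 - e2) (e1 - e2) = 1 *s (e1 - e2)"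
  "A4_mult (e1 + e2 + \<i> *s e3) (e1 + e2 + \<i> *s e3) = 2 *s (e1 + e2 + \<i> *s e3)"
  "A4_mult (e1 + e2 - \<i> *s e3) (e1 + e2 - \<i> *s e3) = 2 *s (e1 + e2 - \<i> *s e3)"
  "A4_mult (e1 - e2 + \<i> *s e3) (e1 - e2 + \<i> *s e3) = 2 *s (e1 - e2 + \<i> *s e3)"
  "A4_mult (e1 - e2 - \<i> *s e3) (e1 - e2 - \<i> *s e3) = 2 *s (e1 - e2 - \<i> *s e3)"
  unfolding veq3 by (simp_all add: comps e_comps algebra_simps)

lemma nzs: "e1 \<noteq> 0" "e2 \<noteq> 0" "e1 - e2 \<noteq> 0" "e1 + e2 + \<i> *s e3 \<noteq> 0" "e1 + e2 - \<i> *s e3 \<noteq> 0"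
  "e1 - e2 + \<i> *s e3 \<noteq> 0" "e1 - e2 - \<i> *s e3 \<noteq> 0"
  unfolding veq3 by (simp_all add: e_comps)

lemma good: "A4_mult w w = l *s w \<Longrightarrow> w \<noteq> 0 \<Longrightarrow> A4_subalgebra (vec.span {w}) \<and> vec.dim (vec.span {w}) = 1"
  using sub_span dim1 by blast

theorem mainTheorem10:
  shows "(\<forall>S. (A4_subalgebra S \<and> vec.dim S = 1) \<longleftrightarrow>
            S \<in> {vec.span {e1}, vec.span {e2}, vec.span {e1 - e2},
                 vec.span {e1 + e2 + \<i> *s e3}, vec.span {e1 + e2 - \<i> *s e3},
                 vec.span {e1 - e2 + \<i> *s e3}, vec.span {e1 - e2 - \<i> *s e3}})
       \<and> (\<forall>S. A4_subalgebra S \<and> vec.dim S = 1 \<longrightarrow>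
            (\<exists>f T. A4_automorphism f \<and> f ` S = T \<and>
               T \<in> {vec.span {e1}, vec.span {e2}, vec.span {e1 - e2},
                    vec.span {e1 + e2 + \<i> *s e3}, vec.span {e1 - e2 + \<i> *s e3}}))"
proof -
  have P1: "(A4_subalgebra S \<and> vec.dim S = 1) \<longleftrightarrow>
            S \<in> {vec.span {e1}, vec.span {e2}, vec.span {e1 - e2},
                 vec.span {e1 + e2 + \<i> *s e3}, vec.span {e1 + e2 - \<i> *s e3},
                 vec.span {e1 - e2 + \<i> *s e3}, vec.span {e1 - e2 - \<i> *s e3}}" for S
  proof
    assume "A4_subalgebra S \<and> vec.dim S = 1"
    then obtain v l where "v \<noteq> 0" "S = vec.span {v}" "A4_mult v v = l *s v" using from_S by blast
    then show "S \<in> {vec.span {e1}, vec.span {e2}, vec.span {e1 - e2},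
                 vec.span {e1 + e2 + \<i> *s e3}, vec.span {e1 + e2 - \<i> *s e3},
                 vec.span {e1 - e2 + \<i> *s e3}, vec.span {e1 - e2 - \<i> *s e3}}" using classify by simp
  next
    assume "S \<in> {vec.span {e1}, vec.span {e2}, vec.span {e1 - e2},
                 vec.span {e1 + e2 + \<i> *s e3}, vec.span {e1 + e2 - \<i> *s e3},
                 vec.span {e1 - e2 + \<i> *s e3}, vec.span {e1 - e2 - \<i> *s e3}}"
    then show "A4_subalgebra S \<and> vec.dim S = 1"
    proof (elim insertE emptyE)
    qed (use good[OF ww(1) nzs(1)] good[OF ww(2) nzs(2)] good[OF ww(3) nzs(3)] good[OF ww(4) nzs(4)]
        good[OF ww(5) nzs(5)] good[OF ww(6) nzs(6)] good[OF ww(7) nzs(7)] in simp_all)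
  qed
  have P2: "\<exists>f T. A4_automorphism f \<and> f ` S = T \<and>
               T \<in> {vec.span {e1}, vec.span {e2}, vec.span {e1 - e2},
                    vec.span {e1 + e2 + \<i> *s e3}, vec.span {e1 - e2 + \<i> *s e3}}"
    if "A4_subalgebra S \<and> vec.dim S = 1" for S
  proof -
    have S: "S \<in> {vec.span {e1}, vec.span {e2}, vec.span {e1 - e2},
                 vec.span {e1 + e2 + \<i> *s e3}, vec.span {e1 + e2 - \<i> *s e3},
                 vec.span {e1 - e2 + \<i> *s e3}, vec.span {e1 - e2 - \<i> *s e3}}"
      using P1 that by blast
    show ?thesis
    proof (cases "S = vec.span {e1 + e2 - \<i> *s e3} \<or> S = vec.span {e1 - e2 - \<i> *s e3}")
      case True
      then show ?thesis
      proof
        assume "S = vec.span {e1 + e2 - \<i> *s e3}"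
        then show ?thesis using flip_aut flip_img flip_e
          by (intro exI[of _ flip] exI[of _ "vec.span {e1 + e2 + \<i> *s e3}"]) simp
      next
        assume "S = vec.span {e1 - e2 - \<i> *s e3}"
        then show ?thesis using flip_aut flip_img flip_e
          by (intro exI[of _ flip] exI[of _ "vec.span {e1 - e2 + \<i> *s e3}"]) simp
      qed
    next
      case False
      have "S \<in> {vec.span {e1}, vec.span {e2}, vec.span {e1 - e2},
                    vec.span {e1 + e2 + \<i> *s e3}, vec.span {e1 - e2 + \<i> *s e3}}"
        using S False by blast
      then show ?thesis using id_aut by (intro exI[of _ id] exI[of _ S]) simp
    qed
  qed
  show ?thesis using P1 P2 by blast
qed

end
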